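(* Let $n\ge 2$, inputs $s_j\in\mathbb{Z}_{c_j}$, outputs $m_j\in\mathbb{Z}_d$ with $d$ prime, and let $F:\mathbb{Z}_{c_1}\times\cdots\times\mathbb{Z}_{c_n}\to\mathbb{Z}_d$ be any function. Then the set of non-signalling distributions $p(\mathbf{m}|\mathbf{s})$ whose correlator equals the deterministic correlator $p(k|\mathbf{s})=\delta^k_{F(\mathbf{s})}$ (a vertex of $\mathcal{P}$) is a face of the non-signalling polytope $\mathcal{NS}$.
   Context: Correlator of $p(\mathbf{m}|\mathbf{s})$: $p(k|\mathbf{s})=\sum_{\mathbf{m}:[\sum_j m_j]_d=k}p(\mathbf{m}|\mathbf{s})$, $[\cdot]_d$ reduction mod $d$. $\mathcal{P}$ is the convex polytope of all correlator families, with vertices the deterministic correlators $\delta^k_{F(\mathbf{s})}$. Non-signalling: for every subset $\mathcal{J}$ and inputs $\mathbf{s},\mathbf{s}'$ agreeing outside $\mathcal{J}$, $\sum_{(m_j)_{j\in\mathcal{J}}}p(\mathbf{m}|\mathbf{s})=\sum_{(m_j)_{j\in\mathcal{J}}}p(\mathbf{m}|\mathbf{s}')$. $\mathcal{NS}$ is the convex polytope of all non-signalling conditional distributions (nonnegative, normalised for each $\mathbf{s}$), viewed as vectors in a real space; a face is meant in the sense of convex polytopes. *)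

theory Defs
  imports "HOL-Analysis.Analysis" "HOL-Library.Function_Algebras"
begin

(* Pointwise real vector space structure on functions (needed to speak of
   faces, in the sense of convex sets/polytopes, via the library notion face_of). *)
instantiation "fun" :: (type, real_vector) real_vector
begin
definition scaleR_fun :: "real \<Rightarrow> ('a \<Rightarrow> 'b) \<Rightarrow> 'a \<Rightarrow> 'b"
  where "scaleR_fun r f = (\<lambda>x. r *\<^sub>R f x)"
instance
  by standard (auto simp: scaleR_fun_def fun_eq_iff scaleR_add_right scaleR_add_left)
end

definition inputs :: "nat \<Rightarrow> (nat \<Rightarrow> nat) \<Rightarrow> (nat \<Rightarrow> nat) set" where
  "inputs n c = PiE {..<n} (\<lambda>j. {..<c j})"

definition outputs :: "nat \<Rightarrow> nat \<Rightarrow> (nat \<Rightarrow> nat) set" where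
  "outputs n d = PiE {..<n} (\<lambda>j. {..<d})"

type_synonym behaviour = "(nat \<Rightarrow> nat) \<Rightarrow> (nat \<Rightarrow> nat) \<Rightarrow> real"
  (* p s m = p(m|s) *)

definition cond_dists :: "nat \<Rightarrow> (nat \<Rightarrow> nat) \<Rightarrow> nat \<Rightarrow> behaviour set" where
  "cond_dists n c d = {p.
     (\<forall>s m. 0 \<le> p s m) \<and>
     (\<forall>s m. \<not> (s \<in> inputs n c \<and> m \<in> outputs n d) \<longrightarrow> p s m = 0) \<and>
     (\<forall>s \<in> inputs n c. (\<Sum>m \<in> outputs n d. p s m) = 1)}"

definition non_signalling :: "nat \<Rightarrow> (nat \<Rightarrow> nat) \<Rightarrow> nat \<Rightarrow> behaviour \<Rightarrow> bool" where
  "non_signalling n c d p \<longleftrightarrow>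
     (\<forall>J \<subseteq> {..<n}. \<forall>s \<in> inputs n c. \<forall>s' \<in> inputs n c.
        (\<forall>j \<in> {..<n} - J. s j = s' j) \<longrightarrow>
        (\<forall>m \<in> outputs n d.
           (\<Sum>m' \<in> {m' \<in> outputs n d. \<forall>j \<in> {..<n} - J. m' j = m j}. p s m') =
           (\<Sum>m' \<in> {m' \<in> outputs n d. \<forall>j \<in> {..<n} - J. m' j = m j}. p s' m')))"

definition NS :: "nat \<Rightarrow> (nat \<Rightarrow> nat) \<Rightarrow> nat \<Rightarrow> behaviour set" where
  "NS n c d = {p \<in> cond_dists n c d. non_signalling n c d p}"

definition correlator :: "nat \<Rightarrow> nat \<Rightarrow> behaviour \<Rightarrow> (nat \<Rightarrow> nat) \<Rightarrow> nat \<Rightarrow> real" where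
  "correlator n d p s k = (\<Sum>m \<in> {m \<in> outputs n d. (\<Sum>j<n. m j) mod d = k}. p s m)"

end

theory Submission
  imports Defs
begin

lemma comb_app: "(u *\<^sub>R (a::behaviour) + v *\<^sub>R b) s m = u * a s m + v * b s m"
  by (simp add: scaleR_fun_def plus_fun_def)

lemma sum_comb: "(\<Sum>m\<in>A. (u *\<^sub>R (a::behaviour) + v *\<^sub>R b) s m) = u * (\<Sum>m\<in>A. a s m) + v * (\<Sum>m\<in>A. b s m)"
  by (simp only: comb_app sum.distrib sum_distrib_left)

lemma corr_comb: "correlator n d (u *\<^sub>R a + v *\<^sub>R b) s k = u * correlator n d a s k + v * correlator n d b s k"
  unfolding correlator_def by (rule sum_comb)

lemma NS_comb:
  assumes "a \<in> NS n c d" "b \<in> NS n c d" "u \<ge> 0" "v \<ge> 0" "u + v = 1"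
  shows "u *\<^sub>R a + v *\<^sub>R b \<in> NS n c d"
proof -
  let ?p = "u *\<^sub>R a + v *\<^sub>R b"
  have A: "\<forall>s m. 0 \<le> a s m" "\<forall>s m. \<not> (s \<in> inputs n c \<and> m \<in> outputs n d) \<longrightarrow> a s m = 0"
     "\<forall>s \<in> inputs n c. (\<Sum>m \<in> outputs n d. a s m) = 1" "non_signalling n c d a"
    using assms(1) unfolding NS_def cond_dists_def by auto
  have B: "\<forall>s m. 0 \<le> b s m" "\<forall>s m. \<not> (s \<in> inputs n c \<and> m \<in> outputs n d) \<longrightarrow> b s m = 0"
     "\<forall>s \<in> inputs n c. (\<Sum>m \<in> outputs n d. b s m) = 1" "non_signalling n c d b"
    using assms(2) unfolding NS_def cond_dists_def by auto
  have 1: "\<forall>s m. 0 \<le> ?p s m" using A(1) B(1) assms(3,4) by (simp add: scaleR_fun_def)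
  have 2: "\<forall>s m. \<not> (s \<in> inputs n c \<and> m \<in> outputs n d) \<longrightarrow> ?p s m = 0"
    using A(2) B(2) by (simp add: scaleR_fun_def)
  have 3: "\<forall>s \<in> inputs n c. (\<Sum>m \<in> outputs n d. ?p s m) = 1"
    using A(3) B(3) assms(5) by (simp only: sum_comb) simp
  have 4: "non_signalling n c d ?p"
    unfolding non_signalling_def
  proof (intro allI impI ballI)
    fix J s s' m
    assume h: "J \<subseteq> {..<n}" "s \<in> inputs n c" "s' \<in> inputs n c"
      "\<forall>j\<in>{..<n} - J. s j = s' j" "m \<in> outputs n d"
    have "(\<Sum>m' \<in> {m' \<in> outputs n d. \<forall>j \<in> {..<n} - J. m' j = m j}. a s m') =
           (\<Sum>m' \<in> {m' \<in> outputs n d. \<forall>j \<in> {..<n} - J. m' j = m j}. a s' m')"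
      "(\<Sum>m' \<in> {m' \<in> outputs n d. \<forall>j \<in> {..<n} - J. m' j = m j}. b s m') =
           (\<Sum>m' \<in> {m' \<in> outputs n d. \<forall>j \<in> {..<n} - J. m' j = m j}. b s' m')"
      using A(4)[unfolded non_signalling_def, rule_format, of J s s' m]
        B(4)[unfolded non_signalling_def, rule_format, of J s s' m] h by blast+
    then show "(\<Sum>m' \<in> {m' \<in> outputs n d. \<forall>j \<in> {..<n} - J. m' j = m j}. ?p s m') =
           (\<Sum>m' \<in> {m' \<in> outputs n d. \<forall>j \<in> {..<n} - J. m' j = m j}. ?p s' m')"
      by (simp only: sum_comb)
  qed
  show ?thesis using 1 2 3 4 unfolding NS_def cond_dists_def by blast
qed

lemma finite_outputs: "finite (outputs n d)"
  unfolding outputs_def by (rule finite_PiE) auto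

lemma corr_nonneg: "p \<in> NS n c d \<Longrightarrow> correlator n d p s k \<ge> 0"
  unfolding correlator_def NS_def cond_dists_def by (auto intro: sum_nonneg)

lemma corr_le1: assumes "p \<in> NS n c d" "s \<in> inputs n c"
  shows "correlator n d p s k \<le> 1"
proof -
  have "correlator n d p s k \<le> (\<Sum>m \<in> outputs n d. p s m)"
    unfolding correlator_def
    by (rule sum_mono2[OF finite_outputs]) (use assms in \<open>auto simp: NS_def cond_dists_def\<close>)
  also have "\<dots> = 1" using assms by (auto simp: NS_def cond_dists_def)
  finally show ?thesis .
qed

theorem proposition2p3p1:
  fixes n d :: nat and c :: "nat \<Rightarrow> nat" and F :: "(nat \<Rightarrow> nat) \<Rightarrow> nat"
  assumes "n \<ge> 2"
    and "prime d"
    and "\<forall>s \<in> inputs n c. F s < d"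
  shows "{p \<in> NS n c d. \<forall>s \<in> inputs n c. \<forall>k < d.
            correlator n d p s k = (if k = F s then 1 else 0)} face_of NS n c d"
  unfolding face_of_def
proof (intro conjI ballI impI)
  show "{p \<in> NS n c d. \<forall>s \<in> inputs n c. \<forall>k < d.
            correlator n d p s k = (if k = F s then 1 else 0)} \<subseteq> NS n c d" by auto
  show "convex {p \<in> NS n c d. \<forall>s \<in> inputs n c. \<forall>k < d.
            correlator n d p s k = (if k = F s then 1 else 0)}"
    unfolding convex_def
  proof (intro ballI allI impI)
    fix x y :: behaviour and u v :: real
    assume x: "x \<in> {p \<in> NS n c d. \<forall>s \<in> inputs n c. \<forall>k < d.
            correlator n d p s k = (if k = F s then 1 else 0)}"
      and y: "y \<in> {p \<in> NS n c d. \<forall>s \<in> inputs n c. \<forall>k < d.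
            correlator n d p s k = (if k = F s then 1 else 0)}"
      and uv: "0 \<le> u" "0 \<le> v" "u + v = 1"
    have "u *\<^sub>R x + v *\<^sub>R y \<in> NS n c d" using x y uv NS_comb by blast
    moreover have "\<forall>s \<in> inputs n c. \<forall>k < d.
            correlator n d (u *\<^sub>R x + v *\<^sub>R y) s k = (if k = F s then 1 else 0)"
    proof (intro ballI allI impI)
      fix s k assume "s \<in> inputs n c" "k < d"
      then have "correlator n d x s k = (if k = F s then 1 else 0)"
        "correlator n d y s k = (if k = F s then 1 else 0)" using x y by blast+
      then show "correlator n d (u *\<^sub>R x + v *\<^sub>R y) s k = (if k = F s then 1 else 0)"
        unfolding corr_comb using uv(3) by (simp add: distrib_right[symmetric])
    qed
    ultimately show "u *\<^sub>R x + v *\<^sub>R y \<in> {p \<in> NS n c d. \<forall>s \<in> inputs n c. \<forall>k < d.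
            correlator n d p s k = (if k = F s then 1 else 0)}" by blast
  qed
next
  fix a b x
  assume a: "a \<in> NS n c d" and b: "b \<in> NS n c d"
    and x: "x \<in> {p \<in> NS n c d. \<forall>s \<in> inputs n c. \<forall>k < d.
            correlator n d p s k = (if k = F s then 1 else 0)}"
    and seg: "x \<in> open_segment a b"
  obtain u where u: "0 < u" "u < 1" "x = (1 - u) *\<^sub>R a + u *\<^sub>R b"
    using seg by (auto simp: in_segment)
  have key: "correlator n d a s k = (if k = F s then 1 else 0) \<and> correlator n d b s k = (if k = F s then 1 else 0)"
    if s: "s \<in> inputs n c" and k: "k < d" for s k
  proof -
    have e: "(1 - u) * correlator n d a s k + u * correlator n d b s k = (if k = F s then 1 else 0)"
      using x s k u(3) by (auto simp: corr_comb)
    have a0: "correlator n d a s k \<ge> 0" "correlator n d a s k \<le> 1"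
      using corr_nonneg[OF a] corr_le1[OF a s] by auto
    have b0: "correlator n d b s k \<ge> 0" "correlator n d b s k \<le> 1"
      using corr_nonneg[OF b] corr_le1[OF b s] by auto
    show ?thesis
    proof (cases "k = F s")
      case True
      have e1: "(1 - u) * correlator n d a s k + u * correlator n d b s k = 1" using e True by simp
      have m1: "(1 - u) * correlator n d a s k \<le> (1 - u)" using a0 u(2) by (simp add: mult_left_le)
      have m2: "u * correlator n d b s k \<le> u" using b0 u(1) by (simp add: mult_left_le)
      have "correlator n d a s k = 1"
      proof (rule ccontr)
        assume "correlator n d a s k \<noteq> 1"
        then have "correlator n d a s k < 1" using a0 by simp
        then have "(1 - u) * correlator n d a s k < (1 - u)" using u(2) by simp
        then show False using e1 m2 by linarith
      qed
      moreover have "correlator n d b s k = 1"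
      proof (rule ccontr)
        assume "correlator n d b s k \<noteq> 1"
        then have "correlator n d b s k < 1" using b0 by simp
        then have "u * correlator n d b s k < u" using u(1) by simp
        then show False using e1 m1 by linarith
      qed
      ultimately show ?thesis using True by simp
    next
      case False
      have e1: "(1 - u) * correlator n d a s k + u * correlator n d b s k = 0" using e False by simp
      have m1: "(1 - u) * correlator n d a s k \<ge> 0" using a0 u(2) by simp
      have m2: "u * correlator n d b s k \<ge> 0" using b0 u(1) by simp
      have "(1 - u) * correlator n d a s k = 0" "u * correlator n d b s k = 0" using e1 m1 m2 by linarith+
      then show ?thesis using False u by simp
    qed
  qed
  show "a \<in> {p \<in> NS n c d. \<forall>s \<in> inputs n c. \<forall>k < d.
            correlator n d p s k = (if k = F s then 1 else 0)}"
    using a key by blast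
  show "b \<in> {p \<in> NS n c d. \<forall>s \<in> inputs n c. \<forall>k < d.
            correlator n d p s k = (if k = F s then 1 else 0)}"
    using b key by blast
qed

end
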